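(* Let $k\ge 1$ be an integer and let $n_0,\dots,n_k$ be real numbers with $n_k\ge n_j>1$ for all $j=0,1,\dots,k-1$. Let $1<c<3/2$ and let $K:[0,\infty)\to[0,\infty)$ be nondecreasing and satisfy $$\int_1^\infty \frac{\varphi_K(s)}{s^{2c-1}}\,ds<\infty .$$ Then there exists a constant $\alpha>0$, depending only on $k$, $c$, $n_k$ and $K$, such that the following holds: if $A_0,\dots,A_{k-1}$ are analytic in $\mathbb D$ and satisfy $$\sup_{z\in\mathbb D}|A_j(z)|(1-|z|^2)^{n_k(k-j)}\le \alpha\quad (j=1,\dots,k-1),\qquad \sup_{z\in\mathbb D}|A_0(z)|(1-|z|^2)^{n_k(k-c)}\le\alpha,$$ then every solution $f$ of $$(f^{(k)})^{n_k}+A_{k-1}(z)(f^{(k-1)})^{n_{k-1}}+\cdots+A_1(z)(f')^{n_1}+A_0(z)f^{n_0}=0$$ belongs to $Q_K$.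
   Context: $\mathbb D$ is the open unit disk, $H(\mathbb D)$ the analytic functions on $\mathbb D$, $d\sigma$ area measure on $\mathbb D$ normalized so that $\sigma(\mathbb D)=1$. For $a\in\mathbb D$, $\varphi_a(z)=(a-z)/(1-\bar a z)$ and $g(a,z)=-\log|\varphi_a(z)|$. For a nondecreasing $K:[0,\infty)\to[0,\infty)$, $Q_K$ is the space of $f\in H(\mathbb D)$ with $\|f\|_{Q_K}^2=\sup_{a\in\mathbb D}\int_{\mathbb D}|f'(z)|^2K(g(a,z))\,d\sigma(z)<\infty$, and $\varphi_K(s)=\sup_{0\le t\le 1}K(st)/K(t)$ for $0<s<\infty$. A solution of the (nonlinear) equation is an analytic function $f$ on $\mathbb D$ satisfying it, where the real powers $(f^{(j)})^{n_j}$ are understood via some choice of branches, so that in particular $|(f^{(j)})^{n_j}|=|f^{(j)}|^{n_j}$. *)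

theory Defs
  imports "HOL-Analysis.Analysis"
begin

definition unit_disk :: "complex set" where
  "unit_disk = ball 0 1"

definition moeb :: "complex \<Rightarrow> complex \<Rightarrow> complex" where
  "moeb a z = (a - z) / (1 - cnj a * z)"

definition green :: "complex \<Rightarrow> complex \<Rightarrow> real" where
  "green a z = - ln (norm (moeb a z))"

text \<open>Q_K space; area measure normalized: d sigma = (Lebesgue area)/pi.\<close>
definition QK_norm2 :: "(real \<Rightarrow> real) \<Rightarrow> (complex \<Rightarrow> complex) \<Rightarrow> ennreal" where
  "QK_norm2 K f = (SUP a\<in>unit_disk.
      \<integral>\<^sup>+ z. indicator unit_disk z *
          ennreal ((norm (deriv f z))\<^sup>2 * K (green a z) / pi) \<partial>lborel)"

definition in_QK :: "(real \<Rightarrow> real) \<Rightarrow> (complex \<Rightarrow> complex) \<Rightarrow> bool" where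
  "in_QK K f \<longleftrightarrow> f holomorphic_on unit_disk \<and> QK_norm2 K f < \<infinity>"

text \<open>phi_K(s) = sup over 0<=t<=1 of K(st)/K(t), computed in the extended
  nonnegative reals (so a quotient x/0 with x>0 is infinite).\<close>
definition phiK :: "(real \<Rightarrow> real) \<Rightarrow> real \<Rightarrow> ennreal" where
  "phiK K s = (SUP t\<in>{0..1}. ennreal (K (s * t)) / ennreal (K t))"

text \<open>w is a value of the (multivalued) real power z^p for some branch.\<close>
definition is_power_branch :: "complex \<Rightarrow> real \<Rightarrow> complex \<Rightarrow> bool" where
  "is_power_branch z p w \<longleftrightarrow>
     (if z = 0 then w = 0 else (\<exists>L. exp L = z \<and> w = exp (complex_of_real p * L)))"

end

theory Submission
  imports Defs "HOL-Complex_Analysis.Complex_Analysis"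
begin


lemma norm_diff_le_by_deriv:
  fixes \<phi> :: "real \<Rightarrow> complex"
  assumes ab: "a \<le> b"
    and d\<phi>: "\<And>t. t \<in> {a..b} \<Longrightarrow> (\<phi> has_vector_derivative \<phi>' t) (at t)"
    and dg: "\<And>t. t \<in> {a..b} \<Longrightarrow> (g has_real_derivative g' t) (at t)"
    and le: "\<And>t. t \<in> {a..b} \<Longrightarrow> norm (\<phi>' t) \<le> g' t"
  shows "norm (\<phi> b - \<phi> a) \<le> g b - g a"
proof (cases "\<phi> b = \<phi> a")
  case True
  have "g a \<le> g b"
  proof (rule DERIV_nonneg_imp_increasing_open[OF ab])
    fix x assume "a < x" "x < b"
    then show "\<exists>y. (g has_real_derivative y) (at x) \<and> 0 \<le> y"
      using dg[of x] le[of x] by (intro exI[of _ "g' x"]) (auto intro: order_trans[OF norm_ge_zero])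
  next
    show "continuous_on {a..b} g"
      using dg by (intro continuous_at_imp_continuous_on) (meson DERIV_isCont atLeastAtMost_iff)
  qed
  then show ?thesis using True by simp
next
  case False
  define u where "u = \<phi> b - \<phi> a"
  have u0: "norm u > 0" using False by (simp add: u_def)
  define h where "h t = Re (cnj u * \<phi> t) / norm u - g t" for t
  have dh: "(h has_real_derivative (Re (cnj u * \<phi>' t) / norm u - g' t)) (at t)" if "t \<in> {a..b}" for t
  proof -
    have "((\<lambda>t. cnj u * \<phi> t) has_vector_derivative (cnj u * \<phi>' t)) (at t)"
      using d\<phi>[OF that] by (rule has_vector_derivative_mult_right)
    then have "((\<lambda>t. Re (cnj u * \<phi> t)) has_real_derivative Re (cnj u * \<phi>' t)) (at t)"
      by (rule has_field_derivative_Re)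
    then have "((\<lambda>t. Re (cnj u * \<phi> t) / norm u) has_real_derivative Re (cnj u * \<phi>' t) / norm u) (at t)"
      by (rule DERIV_cdivide)
    from DERIV_diff[OF this dg[OF that]] show ?thesis unfolding h_def by simp
  qed
  have hle: "Re (cnj u * \<phi>' t) / norm u - g' t \<le> 0" if "t \<in> {a..b}" for t
  proof -
    have "Re (cnj u * \<phi>' t) \<le> norm (cnj u * \<phi>' t)" by (rule complex_Re_le_cmod)
    also have "\<dots> = norm u * norm (\<phi>' t)" by (simp add: norm_mult)
    finally have "Re (cnj u * \<phi>' t) / norm u \<le> norm (\<phi>' t)" using u0
      by (simp add: divide_le_eq mult.commute)
    then show ?thesis using le[OF that] by simp
  qed
  have "h b \<le> h a"
  proof (rule DERIV_nonpos_imp_decreasing_open[OF ab])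
    fix x assume "a < x" "x < b"
    then show "\<exists>y. (h has_real_derivative y) (at x) \<and> y \<le> 0"
      using dh[of x] hle[of x] by (intro exI) auto
  next
    show "continuous_on {a..b} h"
      using dh by (intro continuous_at_imp_continuous_on) (meson DERIV_isCont atLeastAtMost_iff)
  qed
  moreover have "Re (cnj u * \<phi> b) - Re (cnj u * \<phi> a) = norm u ^ 2"
  proof -
    have "Re (cnj u * \<phi> b) - Re (cnj u * \<phi> a) = Re (cnj u * u)" by (simp add: u_def algebra_simps)
    also have "\<dots> = norm u ^ 2" using cmod_power2[of u] by (simp add: power2_eq_square)
    finally show ?thesis .
  qed
  ultimately have "norm u ^ 2 / norm u \<le> g b - g a"
  proof -
    assume A: "h b \<le> h a" and B: "Re (cnj u * \<phi> b) - Re (cnj u * \<phi> a) = norm u ^ 2"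
    have "norm u ^ 2 / norm u = Re (cnj u * \<phi> b) / norm u - Re (cnj u * \<phi> a) / norm u"
      by (simp only: B[symmetric] diff_divide_distrib)
    with A show ?thesis unfolding h_def by linarith
  qed
  then show ?thesis using u0 by (simp add: u_def power2_eq_square)
qed



lemma K_key:
  assumes mono: "mono_on {0..} K" and pos: "\<forall>t\<ge>0. K t \<ge> 0" and s: "s \<ge> 1" and c: "c \<ge> 1/2"
  shows "ennreal (K s) / ennreal (K 1) * ennreal (s * (2 * s) powr (1 - 2*c))
     \<le> (\<integral>\<^sup>+ x\<in>{1..}. phiK K x * ennreal (1 / x powr (2*c - 1)) \<partial>lborel)"
proof -
  define Q where "Q = ennreal (K s) / ennreal (K 1) * ennreal ((2 * s) powr (1 - 2*c))"
  have "(\<integral>\<^sup>+ x. Q * indicator {s..2 * s} x \<partial>lborel) \<le>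
        (\<integral>\<^sup>+ x\<in>{1..}. phiK K x * ennreal (1 / x powr (2*c - 1)) \<partial>lborel)"
  proof (rule nn_integral_mono)
    fix x :: real
    show "Q * indicator {s..2 * s} x \<le> phiK K x * ennreal (1 / x powr (2*c - 1)) * indicator {1..} x"
    proof (cases "x \<in> {s..2 * s}")
      case True
      then have x1: "x \<ge> 1" and xs: "s \<le> x" "x \<le> 2 * s" using s by auto
      have "ennreal (K s) / ennreal (K 1) \<le> ennreal (K x) / ennreal (K 1)"
        using mono xs s by (intro divide_right_mono_ennreal ennreal_leI) (auto intro: mono_onD)
      also have "\<dots> = ennreal (K (x * 1)) / ennreal (K 1)" by simp
      also have "\<dots> \<le> phiK K x" unfolding phiK_def by (rule SUP_upper) auto
      finally have 1: "ennreal (K s) / ennreal (K 1) \<le> phiK K x" .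
      have 2: "ennreal ((2 * s) powr (1 - 2*c)) \<le> ennreal (1 / x powr (2*c - 1))"
      proof (rule ennreal_leI)
        have "1 / x powr (2*c - 1) = x powr (1 - 2*c)"
          using x1 by (simp add: powr_minus_divide[symmetric])
        moreover have "(2 * s) powr (1 - 2*c) \<le> x powr (1 - 2*c)"
          using c xs x1 by (intro powr_mono2') auto
        ultimately show "(2 * s) powr (1 - 2*c) \<le> 1 / x powr (2*c - 1)" by simp
      qed
      show ?thesis using True 1 2 x1 unfolding Q_def by (auto intro: mult_mono)
    next
      case False then show ?thesis by simp
    qed
  qed
  also have "(\<integral>\<^sup>+ x. Q * indicator {s..2 * s} x \<partial>lborel) = Q * ennreal s"
    using s by (simp add: nn_integral_cmult_indicator)
  finally have F: "Q * ennreal s \<le> (\<integral>\<^sup>+ x\<in>{1..}. phiK K x * ennreal (1 / x powr (2*c - 1)) \<partial>lborel)" .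
  have "ennreal (s * (2 * s) powr (1 - 2*c)) = ennreal s * ennreal ((2 * s) powr (1 - 2*c))"
    using s by (simp add: ennreal_mult)
  then have "ennreal (K s) / ennreal (K 1) * ennreal (s * (2 * s) powr (1 - 2*c)) = Q * ennreal s"
    unfolding Q_def by (simp add: ac_simps)
  with F show ?thesis by simp
qed

lemma K_linear_bound:
  assumes mono: "mono_on {0..} K" and pos: "\<forall>t\<ge>0. K t \<ge> 0" and c: "1 < c" "c < 3/2"
    and I: "(\<integral>\<^sup>+ s\<in>{1..}. phiK K s * ennreal (1 / s powr (2*c - 1)) \<partial>lborel) < \<infinity>"
  shows "\<exists>C\<ge>0. \<forall>t\<ge>0. K t \<le> C * (1 + t)"
proof -
  define J where "J = (\<integral>\<^sup>+ s\<in>{1..}. phiK K s * ennreal (1 / s powr (2*c - 1)) \<partial>lborel)"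
  define I0 where "I0 = enn2real J"
  have J: "J = ennreal I0" using I unfolding I0_def J_def by simp
  have I0: "I0 \<ge> 0" unfolding I0_def by simp
  have key: "ennreal (K s) / ennreal (K 1) * ennreal (s * (2 * s) powr (1 - 2*c)) \<le> ennreal I0"
    if "s \<ge> 1" for s using K_key[OF mono pos that, of c] c J unfolding J_def by simp
  have K1: "K 1 \<ge> 0" using pos by simp
  show ?thesis
  proof (cases "K 1 = 0")
    case True
    have Ks: "K s = 0" if "s \<ge> 1" for s
    proof (rule ccontr)
      assume "K s \<noteq> 0"
      moreover have "K s \<ge> 0" using pos that by simp
      ultimately have "K s > 0" by simp
      then have "ennreal (K s) / ennreal (K 1) = top" using True
        by (simp add: divide_ennreal_def ennreal_mult_top)
      moreover have "s * (2 * s) powr (1 - 2*c) > 0" using that by simp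
      ultimately have "ennreal (K s) / ennreal (K 1) * ennreal (s * (2 * s) powr (1 - 2*c)) = top"
        using that by (simp add: ennreal_top_mult)
      with key[OF that] show False by (simp add: top_unique)
    qed
    have "K t \<le> 0 * (1 + t)" if "t \<ge> 0" for t
    proof (cases "t \<le> 1")
      case True
      then have "K t \<le> K 1" using mono that by (auto intro: mono_onD)
      then show ?thesis using \<open>K 1 = 0\<close> by simp
    next
      case False then show ?thesis using Ks by simp
    qed
    then show ?thesis by (intro exI[of _ 0]) auto
  next
    case False
    then have K1p: "K 1 > 0" using K1 by simp
    define C where "C = K 1 + 4 * I0 * K 1"
    have big: "K s \<le> 4 * I0 * K 1 * s" if s: "s \<ge> 1" for s
    proof -
      have Ks0: "K s \<ge> 0" using pos s by simp
      have p: "s * (2 * s) powr (1 - 2*c) > 0" using s by simp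
      have "ennreal (K s / K 1 * (s * (2 * s) powr (1 - 2*c))) \<le> ennreal I0"
      proof -
        have "ennreal (K s) / ennreal (K 1) = ennreal (K s / K 1)" using K1p Ks0 by (simp add: divide_ennreal)
        moreover have "ennreal (K s / K 1) * ennreal (s * (2 * s) powr (1 - 2*c)) = ennreal (K s / K 1 * (s * (2 * s) powr (1 - 2*c)))"
          using K1p Ks0 p by (subst ennreal_mult[symmetric]) auto
        ultimately show ?thesis using key[OF s] by simp
      qed
      then have A: "K s / K 1 * (s * (2 * s) powr (1 - 2*c)) \<le> I0"
        using I0 by (simp add: ennreal_le_iff)
      have "(2 * s) powr (2*c - 1) \<le> (2 * s) powr 2" using s c by (intro powr_mono) auto
      also have "\<dots> = 4 * s * s" using s by (simp add: powr_numeral power2_eq_square)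
      finally have B: "(2 * s) powr (2*c - 1) \<le> 4 * s * s" .
      have "(2 * s) powr (1 - 2*c) * (2 * s) powr (2*c - 1) = 1"
        using s by (simp add: powr_add[symmetric])
      then have "K s = K s / K 1 * (s * (2 * s) powr (1 - 2*c)) * (2 * s) powr (2*c - 1) * K 1 / s"
        using K1p s by (simp add: field_simps)
      also have "\<dots> \<le> I0 * (4 * s * s) * K 1 / s"
        using A B K1p s Ks0 p I0
        by (intro divide_right_mono mult_right_mono mult_mono) auto
      also have "\<dots> = 4 * I0 * K 1 * s" using s by (simp add: field_simps)
      finally show ?thesis .
    qed
    have "K t \<le> C * (1 + t)" if t: "t \<ge> 0" for t
    proof (cases "t \<le> 1")
      case True
      then have "K t \<le> K 1" using mono that by (auto intro: mono_onD)
      also have "\<dots> \<le> C * (1 + t)" unfolding C_def using I0 K1p t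
        by (simp add: algebra_simps add_increasing mult_nonneg_nonneg)
      finally show ?thesis .
    next
      case False
      then have "K t \<le> 4 * I0 * K 1 * t" using big by simp
      also have "\<dots> \<le> C * (1 + t)" unfolding C_def using I0 K1p t
        by (simp add: algebra_simps add_increasing mult_nonneg_nonneg)
      finally show ?thesis .
    qed
    moreover have "C \<ge> 0" unfolding C_def using I0 K1p by simp
    ultimately show ?thesis by blast
  qed
qed



lemma ennreal_le_suminf: "f i \<le> (\<Sum>n. f n :: ennreal)"
  by (metis ennreal_suminf_lessD not_le order_refl)

lemma emeasure_ball_complex: "r \<ge> 0 \<Longrightarrow> emeasure lborel (ball (a::complex) r) = ennreal (pi * r^2)"
  by (simp add: emeasure_ball unit_ball_vol_2)

lemma geom_ennreal:
  fixes q C :: real assumes "0 \<le> q" "q < 1" "C \<ge> 0"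
  shows "(\<Sum>n. ennreal (C * q ^ n)) = ennreal (C / (1 - q))"
proof -
  have s: "summable (\<lambda>n. C * q ^ n)" using assms by (intro summable_mult summable_geometric) auto
  have "(\<Sum>n. ennreal (C * q ^ n)) = ennreal (\<Sum>n. C * q ^ n)"
    using assms s by (intro suminf_ennreal2) auto
  also have "(\<Sum>n. C * q ^ n) = C / (1 - q)"
    using assms by (simp add: suminf_mult suminf_geometric divide_simps)
  finally show ?thesis .
qed

lemma int_sing:
  fixes a :: complex
  shows "(\<integral>\<^sup>+ z. indicator (ball a 2) z * ennreal (norm (z - a) powr (-1/2)) \<partial>lborel)
           \<le> ennreal (4 * pi / (1 - sqrt 2 / 4))"
proof -
  define F where "F n z = indicator (ball a (2 / 2^n)) z * ennreal (sqrt 2 ^ n)" for n z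
  have pt: "indicator (ball a 2) z * ennreal (norm (z - a) powr (-1/2)) \<le> (\<Sum>n. F n z)" for z
  proof (cases "z \<in> ball a 2 \<and> z \<noteq> a")
    case False then show ?thesis by (auto simp: indicator_def)
  next
    case True
    define d where "d = norm (z - a)"
    have d: "0 < d" "d < 2" using True by (auto simp: d_def dist_norm norm_minus_commute)
    obtain n where n: "(1/2::real) ^ n < d / 2" using real_arch_pow_inv[of "d/2" "1/2::real"] d by auto
    have "2 / 2 ^ n \<le> d" using n by (simp add: power_divide field_simps)
    then obtain k where k: "\<not> (2 / 2 ^ k \<le> d)" "2 / 2 ^ Suc k \<le> d"
      using ex_least_nat_less[of "\<lambda>i. 2 / 2 ^ i \<le> d" n] d by auto
    have zin: "z \<in> ball a (2 / 2 ^ k)" using k(1) by (simp add: d_def dist_norm norm_minus_commute)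
    have dk: "1 / 2 ^ k \<le> d" using k(2) by simp
    have "d powr (-1/2) = 1 / sqrt d" using d by (simp add: powr_minus_divide powr_half_sqrt)
    also have "\<dots> \<le> 1 / sqrt (1 / 2 ^ k)" using dk d by (intro divide_left_mono real_sqrt_le_mono) auto
    also have "\<dots> = sqrt 2 ^ k" by (simp add: real_sqrt_power real_sqrt_divide)
    finally have le: "d powr (-1/2) \<le> sqrt 2 ^ k" .
    have "indicator (ball a 2) z * ennreal (norm (z - a) powr (-1/2)) \<le> F k z"
      using True zin le unfolding F_def d_def by (simp add: ennreal_leI)
    also have "\<dots> \<le> (\<Sum>n. F n z)" by (rule ennreal_le_suminf)
    finally show ?thesis .
  qed
  have "(\<integral>\<^sup>+ z. indicator (ball a 2) z * ennreal (norm (z - a) powr (-1/2)) \<partial>lborel)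
      \<le> (\<integral>\<^sup>+ z. (\<Sum>n. F n z) \<partial>lborel)" by (rule nn_integral_mono) (rule pt)
  also have "\<dots> = (\<Sum>n. \<integral>\<^sup>+ z. F n z \<partial>lborel)"
    by (rule nn_integral_suminf) (unfold F_def, intro borel_measurable_times_ennreal borel_measurable_indicator borel_measurable_const, simp)
  also have "(\<lambda>n. \<integral>\<^sup>+ z. F n z \<partial>lborel) = (\<lambda>n. ennreal (4 * pi * (sqrt 2 / 4) ^ n))"
  proof
    fix n
    have "(\<integral>\<^sup>+ z. F n z \<partial>lborel) = ennreal (sqrt 2 ^ n) * emeasure lborel (ball a (2 / 2^n))"
      unfolding F_def by (subst mult.commute) (simp add: nn_integral_cmult_indicator)
    also have "\<dots> = ennreal (sqrt 2 ^ n * (pi * (2 / 2^n)^2))"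
      by (simp add: emeasure_ball_complex ennreal_mult)
    also have "sqrt 2 ^ n * (pi * (2 / 2^n)^2) = 4 * pi * (sqrt 2 / 4) ^ n"
    proof -
      have "(2 / 2^n :: real)^2 = 4 / 4 ^ n"
        by (simp add: power_divide power_mult_distrib[symmetric] power_mult[symmetric] mult.commute[of n])
          (simp add: power_mult)
      then show ?thesis by (simp add: power_divide)
    qed
    finally show "(\<integral>\<^sup>+ z. F n z \<partial>lborel) = ennreal (4 * pi * (sqrt 2 / 4) ^ n)" .
  qed
  also have "(\<Sum>n. ennreal (4 * pi * (sqrt 2 / 4) ^ n)) = ennreal (4 * pi / (1 - sqrt 2 / 4))"
    by (rule geom_ennreal) (auto simp: real_sqrt_less_iff real_less_lsqrt)
  finally show ?thesis .
qed

lemma int_bdry: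
  "(\<integral>\<^sup>+ z. indicator (ball (0::complex) 1) z * ennreal ((1 - norm z) powr (-1/2)) \<partial>lborel)
     \<le> ennreal pi + ennreal (2 * sqrt 2 * pi / (1 - sqrt 2 / 2))"
proof -
  define R where "R k = ball (0::complex) 1 - ball 0 (1 - 1/2^k)" for k :: nat
  define F where "F k z = indicator (R k) z * ennreal (sqrt 2 ^ Suc k)" for k z
  have pt: "indicator (ball 0 1) z * ennreal ((1 - norm z) powr (-1/2))
       \<le> indicator (ball 0 1) z * ennreal 1 + (\<Sum>n. F n z)" for z
  proof (cases "z \<in> ball 0 1")
    case False then show ?thesis by (auto simp: indicator_def)
  next
    case True
    define d where "d = 1 - norm z"
    have d: "0 < d" "d \<le> 1" using True by (auto simp: d_def)
    show ?thesis
    proof (cases "d = 1")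
      case True
      then show ?thesis using \<open>z \<in> ball 0 1\<close> unfolding d_def[symmetric] by (simp add: add_increasing2)
    next
      case False
      then have d1: "d < 1" using d by simp
      obtain n where n: "(1/2::real) ^ n < d" using real_arch_pow_inv[of "d" "1/2::real"] d by auto
      have "1 / 2 ^ n \<le> d" using n by (simp add: power_divide)
      then obtain k where k: "\<not> (1 / 2 ^ k \<le> d)" "1 / 2 ^ Suc k \<le> d"
        using ex_least_nat_less[of "\<lambda>i. 1 / 2 ^ i \<le> d" n] d1 by auto
      have zin: "z \<in> R k" using k(1) True unfolding R_def d_def by auto
      have "d powr (-1/2) = 1 / sqrt d" using d by (simp add: powr_minus_divide powr_half_sqrt)
      also have "\<dots> \<le> 1 / sqrt (1 / 2 ^ Suc k)" using k(2) d by (intro divide_left_mono real_sqrt_le_mono) auto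
      also have "\<dots> = sqrt 2 ^ Suc k" by (simp only: real_sqrt_power real_sqrt_divide real_sqrt_one) simp
      finally have le: "d powr (-1/2) \<le> sqrt 2 ^ Suc k" .
      have "indicator (ball 0 1) z * ennreal ((1 - norm z) powr (-1/2)) \<le> F k z"
        using True zin le unfolding F_def d_def by (simp add: ennreal_leI)
      also have "\<dots> \<le> (\<Sum>n. F n z)" by (rule ennreal_le_suminf)
      finally show ?thesis by (simp add: add_increasing)
    qed
  qed
  have mF: "F n \<in> borel_measurable lborel" for n
    unfolding F_def R_def
    by (intro borel_measurable_times_ennreal borel_measurable_indicator borel_measurable_const) auto
  have mI: "(indicator (ball (0::complex) 1) :: complex \<Rightarrow> ennreal) \<in> borel_measurable borel"
    by (rule borel_measurable_indicator) simp
  have "(\<integral>\<^sup>+ z. indicator (ball (0::complex) 1) z * ennreal ((1 - norm z) powr (-1/2)) \<partial>lborel)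
      \<le> (\<integral>\<^sup>+ z. indicator (ball 0 1) z * ennreal 1 + (\<Sum>n. F n z) \<partial>lborel)"
    by (rule nn_integral_mono) (rule pt)
  also have "\<dots> = (\<integral>\<^sup>+ z. indicator (ball (0::complex) 1) z * ennreal 1 \<partial>lborel) + (\<integral>\<^sup>+ z. (\<Sum>n. F n z) \<partial>lborel)"
    using nn_integral_add[of "\<lambda>z. indicator (ball (0::complex) 1) z * ennreal 1" lborel "\<lambda>z. \<Sum>n. F n z"]
      borel_measurable_suminf_order[of F lborel] mF
      mI by simp
  also have "(\<integral>\<^sup>+ z. indicator (ball (0::complex) 1) z * ennreal 1 \<partial>lborel) = ennreal pi"
    by (simp add: emeasure_ball_complex)
  also have "(\<integral>\<^sup>+ z. (\<Sum>n. F n z) \<partial>lborel) = (\<Sum>n. \<integral>\<^sup>+ z. F n z \<partial>lborel)"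
    by (rule nn_integral_suminf) (rule mF)
  also have "\<dots> \<le> (\<Sum>n. ennreal (2 * sqrt 2 * pi * (sqrt 2 / 2) ^ n))"
  proof (rule suminf_le)
    fix n
    define \<rho> :: real where "\<rho> = 1 - 1 / 2 ^ n"
    have \<rho>: "0 \<le> \<rho>" "\<rho> \<le> 1" unfolding \<rho>_def by (auto simp: field_simps)
    have "emeasure lborel (R n) = emeasure lborel (ball (0::complex) 1) - emeasure lborel (ball (0::complex) \<rho>)"
      unfolding R_def \<rho>_def[symmetric] using \<rho> by (intro emeasure_Diff) (auto simp: emeasure_ball_complex)
    also have "\<dots> = ennreal (pi - pi * \<rho>^2)"
      using \<rho> by (simp add: emeasure_ball_complex ennreal_minus power_le_one)
    also have "pi - pi * \<rho>^2 \<le> 2 * pi / 2 ^ n"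
    proof -
      have "pi - pi * \<rho>^2 = pi * (1 - \<rho>) * (1 + \<rho>)" by (simp add: algebra_simps power2_eq_square)
      also have "\<dots> \<le> pi * (1 - \<rho>) * 2" using \<rho> by (intro mult_left_mono) auto
      also have "\<dots> = 2 * pi / 2 ^ n" unfolding \<rho>_def by simp
      finally show ?thesis .
    qed
    finally have em: "emeasure lborel (R n) \<le> ennreal (2 * pi / 2 ^ n)" by (simp add: ennreal_leI)
    have "(\<integral>\<^sup>+ z. F n z \<partial>lborel) = ennreal (sqrt 2 ^ Suc n) * emeasure lborel (R n)"
      unfolding F_def by (subst mult.commute) (rule nn_integral_cmult_indicator, simp add: R_def)
    also have "\<dots> \<le> ennreal (sqrt 2 ^ Suc n) * ennreal (2 * pi / 2 ^ n)"
      by (rule mult_left_mono[OF em]) simp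
    also have "\<dots> = ennreal (2 * sqrt 2 * pi * (sqrt 2 / 2) ^ n)"
      by (simp add: ennreal_mult[symmetric] power_divide)
    finally show "(\<integral>\<^sup>+ z. F n z \<partial>lborel) \<le> ennreal (2 * sqrt 2 * pi * (sqrt 2 / 2) ^ n)" .
  qed auto
  also have "(\<Sum>n. ennreal (2 * sqrt 2 * pi * (sqrt 2 / 2) ^ n)) = ennreal (2 * sqrt 2 * pi / (1 - sqrt 2 / 2))"
    by (rule geom_ennreal) (auto simp: real_sqrt_less_iff real_less_lsqrt)
  finally show ?thesis by (simp add: add_mono)
qed



lemma moeb_identity:
  fixes a z :: complex
  shows "(norm (1 - cnj a * z))^2 - (norm (a - z))^2 = (1 - (norm a)^2) * (1 - (norm z)^2)"
  apply (simp only: cmod_power2)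
  apply (simp add: algebra_simps power2_eq_square)
  done

lemma green_nonneg:
  assumes "a \<in> unit_disk" "z \<in> unit_disk"
  shows "green a z \<ge> 0"
proof -
  have a: "norm a < 1" and z: "norm z < 1" using assms by (auto simp: unit_disk_def)
  have "(1 - (norm a)^2) * (1 - (norm z)^2) > 0"
    using a z by (intro mult_pos_pos) (auto simp: power_less_one_iff abs_square_less_1)
  then have "(norm (a - z))^2 < (norm (1 - cnj a * z))^2" using moeb_identity[of a z] by linarith
  then have lt: "norm (a - z) < norm (1 - cnj a * z)" by (rule power2_less_imp_less) simp
  have "norm (moeb a z) \<le> 1"
    unfolding moeb_def using lt by (simp add: norm_divide divide_le_eq_1)
  then show ?thesis unfolding green_def by (cases "moeb a z = 0") (auto simp: ln_le_zero_iff)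
qed

lemma green_upper:
  assumes "a \<in> unit_disk" "z \<in> unit_disk" "z \<noteq> a"
  shows "green a z \<le> ln (2 / norm (z - a))"
proof -
  have a: "norm a < 1" and z: "norm z < 1" using assms by (auto simp: unit_disk_def)
  have d: "norm (a - z) > 0" using assms by simp
  have "norm a * norm z \<le> norm a * 1" using z by (intro mult_left_mono) auto
  then have "norm (cnj a * z) < 1" using a by (simp add: norm_mult)
  then have n0: "1 - cnj a * z \<noteq> 0" by auto
  have n2: "norm (1 - cnj a * z) \<le> 2"
    using norm_triangle_ineq4[of 1 "cnj a * z"] \<open>norm (cnj a * z) < 1\<close> by simp
  have "green a z = ln (norm (1 - cnj a * z) / norm (a - z))"
    unfolding green_def moeb_def using d n0 by (simp add: norm_divide ln_div)
  also have "\<dots> \<le> ln (2 / norm (a - z))"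
    using d n0 n2 by (intro ln_mono divide_right_mono) auto
  finally show ?thesis by (simp add: norm_minus_commute)
qed

lemma log_bound:
  fixes Y :: real assumes "Y \<ge> 1"
  shows "(1 + ln Y)^2 \<le> 16 * sqrt Y"
proof -
  define s where "s = sqrt (sqrt Y)"
  have s1: "s \<ge> 1" using assms by (simp add: s_def)
  have Y: "Y = s^4"
  proof -
    have "s^4 = (s^2)^2" by simp
    also have "s^2 = sqrt Y" using assms by (simp add: s_def)
    finally show ?thesis using assms by simp
  qed
  have "ln Y = 4 * ln s" using s1 by (simp add: Y ln_realpow)
  also have "\<dots> \<le> 4 * (s - 1)" using s1 ln_le_minus_one[of s] by simp
  finally have "0 \<le> 1 + ln Y" "1 + ln Y \<le> 4 * s" using assms by auto
  then have "(1 + ln Y)^2 \<le> (4 * s)^2" by (intro power_mono) auto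
  also have "\<dots> = 16 * sqrt Y" using assms by (simp add: s_def power2_eq_square)
  finally show ?thesis .
qed



lemma meas1: "(\<lambda>z::complex. indicator (ball 0 1) z * ennreal ((1 - norm z) powr (-1/2))) \<in> borel_measurable lborel"
proof -
  have [measurable]: "ball (0::complex) 1 \<in> sets borel" by simp
  have "(\<lambda>z::complex. indicator (ball 0 1) z * ennreal ((1 - norm z) powr (-1/2))) \<in> borel_measurable borel"
    by measurable
  then show ?thesis by simp
qed
lemma meas2: "(\<lambda>z::complex. indicator (ball a 2) z * ennreal (norm (z - a) powr (-1/2))) \<in> borel_measurable lborel"
proof -
  have [measurable]: "ball (a::complex) 2 \<in> sets borel" by simp
  have "(\<lambda>z::complex. indicator (ball a 2) z * ennreal (norm (z - a) powr (-1/2))) \<in> borel_measurable borel"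
    by measurable
  then show ?thesis by simp
qed

lemma pointwise_bound:
  fixes f :: "complex \<Rightarrow> complex"
  assumes M: "M \<ge> 0" and df: "norm (deriv f z) \<le> M * (1 - norm z) powr (-1/8)"
    and C: "C \<ge> 0" "\<forall>t\<ge>0. K t \<le> C * (1 + t)"
    and a: "a \<in> unit_disk" and z: "z \<in> unit_disk"
  shows "(norm (deriv f z))^2 * K (green a z) / pi
     \<le> (36 * M^2 * C / pi) * ((1 - norm z) powr (-1/2) + norm (z - a) powr (-1/2) + 1)"
proof -
  have z1: "norm z < 1" using z by (simp add: unit_disk_def)
  define y where "y = (1 - norm z) powr (-1/4)"
  define g where "g = green a z"
  have g0: "g \<ge> 0" unfolding g_def by (rule green_nonneg[OF a z])
  have y0: "y \<ge> 0" unfolding y_def by simp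
  have "(norm (deriv f z))^2 \<le> (M * (1 - norm z) powr (-1/8))^2"
    using df by (intro power_mono) auto
  also have "\<dots> = M^2 * y"
    unfolding y_def power2_eq_square using z1 by (simp add: powr_add[symmetric] algebra_simps)
  finally have d2: "(norm (deriv f z))^2 \<le> M^2 * y" .
  have "(norm (deriv f z))^2 * K g \<le> (norm (deriv f z))^2 * (C * (1 + g))"
    using C g0 by (intro mult_left_mono) auto
  also have "\<dots> \<le> M^2 * y * (C * (1 + g))"
    using d2 C g0 by (intro mult_right_mono) auto
  finally have A: "(norm (deriv f z))^2 * K g \<le> M^2 * C * (y * (1 + g))" by (simp add: ac_simps)
  have B: "y * (1 + g) \<le> y^2 + (1 + g)^2"
  proof -
    have "0 \<le> (y - (1 + g))^2" by simp
    then have "2 * (y * (1 + g)) \<le> y^2 + (1 + g)^2" by (simp add: power2_eq_square algebra_simps)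
    moreover have "0 \<le> y * (1 + g)" using y0 g0 by simp
    ultimately show ?thesis by linarith
  qed
  have Y2: "y^2 = (1 - norm z) powr (-1/2)"
    unfolding y_def power2_eq_square using z1 by (simp add: powr_add[symmetric])
  have G: "(1 + g)^2 \<le> 36 * norm (z - a) powr (-1/2) + 1"
  proof (cases "z = a")
    case True
    then show ?thesis unfolding g_def green_def moeb_def by simp
  next
    case False
    define d where "d = norm (z - a)"
    have d0: "d > 0" using False by (simp add: d_def)
    have "norm z + norm a < 2" using z1 a by (simp add: unit_disk_def)
    then have d2: "d < 2" unfolding d_def using norm_triangle_ineq4[of z a] by linarith
    have Y1: "2 / d \<ge> 1" using d0 d2 by simp
    have "1 + g \<le> 1 + ln (2 / d)" using green_upper[OF a z False] unfolding g_def d_def by simp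
    then have "(1 + g)^2 \<le> (1 + ln (2 / d))^2" using g0 by (intro power_mono) auto
    also have "\<dots> \<le> 16 * sqrt (2 / d)" by (rule log_bound[OF Y1])
    also have "\<dots> = 16 * sqrt 2 * d powr (-1/2)"
      using d0 by (simp add: real_sqrt_divide powr_minus_divide powr_half_sqrt)
    also have "\<dots> \<le> 36 * d powr (-1/2)"
    proof -
      have "sqrt 2 \<le> 2" by (simp add: real_sqrt_le_iff real_le_lsqrt)
      then show ?thesis by (intro mult_right_mono) auto
    qed
    finally show ?thesis unfolding d_def by simp
  qed
  have "(norm (deriv f z))^2 * K g \<le> M^2 * C * ((1 - norm z) powr (-1/2) + 36 * norm (z - a) powr (-1/2) + 1)"
    using A B Y2 G M C by (smt (verit, best) mult_left_mono zero_le_mult_iff zero_le_power2)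
  also have "\<dots> \<le> 36 * M^2 * C * ((1 - norm z) powr (-1/2) + norm (z - a) powr (-1/2) + 1)"
  proof -
    have "(1 - norm z) powr (-1/2) + 36 * norm (z - a) powr (-1/2) + 1 \<le> 36 * ((1 - norm z) powr (-1/2) + norm (z - a) powr (-1/2) + 1)"
      by simp
    from mult_left_mono[OF this, of "M^2 * C"] M C show ?thesis by (simp add: ac_simps)
  qed
  finally show ?thesis unfolding g_def by (simp add: divide_right_mono)
qed

lemma QK_finite:
  fixes f :: "complex \<Rightarrow> complex"
  assumes M: "M \<ge> 0" and df: "\<forall>z\<in>unit_disk. norm (deriv f z) \<le> M * (1 - norm z) powr (-1/8)"
    and C: "C \<ge> 0" "\<forall>t\<ge>0. K t \<le> C * (1 + t)"
  shows "QK_norm2 K f < \<infinity>"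
proof -
  define c0 where "c0 = 36 * M^2 * C / pi"
  have c0: "c0 \<ge> 0" unfolding c0_def using M C by simp
  define B where "B = ennreal c0 * ((ennreal pi + ennreal (2 * sqrt 2 * pi / (1 - sqrt 2 / 2)))
       + ennreal (4 * pi / (1 - sqrt 2 / 4)) + ennreal pi)"
  have B: "B < \<infinity>" unfolding B_def by (simp add: ennreal_mult_less_top)
  have each: "(\<integral>\<^sup>+ z. indicator unit_disk z * ennreal ((norm (deriv f z))\<^sup>2 * K (green a z) / pi) \<partial>lborel) \<le> B"
    if a: "a \<in> unit_disk" for a
  proof -
    define X1 where "X1 z = indicator (ball (0::complex) 1) z * ennreal ((1 - norm z) powr (-1/2))" for z
    define X2 where "X2 z = indicator (ball a 2) z * ennreal (norm (z - a) powr (-1/2))" for z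
    define X3 where "X3 z = (indicator (ball (0::complex) 1) z :: ennreal)" for z
    have pt: "indicator unit_disk z * ennreal ((norm (deriv f z))\<^sup>2 * K (green a z) / pi)
        \<le> ennreal c0 * (X1 z + X2 z + X3 z)" for z
    proof (cases "z \<in> unit_disk")
      case False then show ?thesis by simp
    next
      case True
      have zb: "z \<in> ball a 2"
      proof -
        have "norm z + norm a < 2" using True a by (simp add: unit_disk_def)
        then show ?thesis using norm_triangle_ineq4[of a z] by (simp add: dist_norm)
      qed
      have "ennreal ((norm (deriv f z))\<^sup>2 * K (green a z) / pi)
          \<le> ennreal (c0 * ((1 - norm z) powr (-1/2) + norm (z - a) powr (-1/2) + 1))"
        using pointwise_bound[OF M df[rule_format, OF True] C a True] unfolding c0_def
        by (rule ennreal_leI)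
      also have "\<dots> = ennreal c0 * (X1 z + X2 z + X3 z)"
      proof -
        have "ennreal ((1 - norm z) powr (-1/2) + norm (z - a) powr (-1/2) + 1)
            = ennreal ((1 - norm z) powr (-1/2)) + ennreal (norm (z - a) powr (-1/2)) + ennreal 1"
          by (subst ennreal_plus, simp, simp)+ simp
        then show ?thesis
          using True zb c0 unfolding X1_def X2_def X3_def unit_disk_def
          by (simp add: ennreal_mult)
      qed
      finally show ?thesis using True by simp
    qed
    have m1: "X1 \<in> borel_measurable lborel" unfolding X1_def by (rule meas1)
    have m2: "X2 \<in> borel_measurable lborel" unfolding X2_def by (rule meas2)
    have m3: "X3 \<in> borel_measurable lborel" unfolding X3_def by (rule borel_measurable_indicator) simp
    have "(\<integral>\<^sup>+ z. indicator unit_disk z * ennreal ((norm (deriv f z))\<^sup>2 * K (green a z) / pi) \<partial>lborel)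
        \<le> (\<integral>\<^sup>+ z. ennreal c0 * (X1 z + X2 z + X3 z) \<partial>lborel)"
      by (rule nn_integral_mono) (rule pt)
    also have "\<dots> = ennreal c0 * ((\<integral>\<^sup>+ z. X1 z \<partial>lborel) + (\<integral>\<^sup>+ z. X2 z \<partial>lborel) + (\<integral>\<^sup>+ z. X3 z \<partial>lborel))"
      using m1 m2 m3 by (simp add: nn_integral_cmult nn_integral_add)
    also have "\<dots> \<le> B"
    proof -
      have "(\<integral>\<^sup>+ z. X1 z \<partial>lborel) \<le> ennreal pi + ennreal (2 * sqrt 2 * pi / (1 - sqrt 2 / 2))"
        unfolding X1_def by (rule int_bdry)
      moreover have "(\<integral>\<^sup>+ z. X2 z \<partial>lborel) \<le> ennreal (4 * pi / (1 - sqrt 2 / 4))"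
        unfolding X2_def by (rule int_sing)
      moreover have "(\<integral>\<^sup>+ z. X3 z \<partial>lborel) = ennreal pi"
        unfolding X3_def by (simp add: emeasure_ball_complex)
      ultimately show ?thesis unfolding B_def by (intro mult_left_mono add_mono) auto
    qed
    finally show ?thesis .
  qed
  have "QK_norm2 K f \<le> B" unfolding QK_norm2_def by (rule SUP_least) (rule each)
  with B show ?thesis by (simp add: le_less_trans)
qed



lemma deriv_pow1m:
  fixes a t :: real assumes "t < 1"
  shows "((\<lambda>t. (1 - t) powr a) has_real_derivative (- a * (1 - t) powr (a - 1))) (at t)"
proof -
  have "((\<lambda>t. 1 - t) has_real_derivative -1) (at t)" by (auto intro!: derivative_eq_intros)
  from DERIV_fun_powr[OF this, of a] assms show ?thesis by simp
qed

lemma powr_pair_le: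
  fixes a b p :: real assumes "a \<ge> 0" "b \<ge> 0" "p \<ge> 1"
  shows "a powr p + b powr p \<le> (a + b) powr p"
proof (cases "a + b = 0")
  case True then have "a = 0" "b = 0" using assms by auto
  then show ?thesis by simp
next
  case False
  define s where "s = a + b"
  have s: "s > 0" using False assms by (simp add: s_def)
  have x: "a powr p \<le> s powr p * (a / s)" if "0 \<le> a" "a \<le> s" for a
  proof -
    have "a powr p = (s * (a / s)) powr p" using s by simp
    also have "\<dots> = s powr p * (a / s) powr p" using s that by (intro powr_mult)
    also have "(a / s) powr p \<le> (a / s) powr 1" using s that assms by (intro powr_mono') auto
    then have "s powr p * (a / s) powr p \<le> s powr p * (a / s)" using that s by (intro mult_left_mono) auto
    finally show ?thesis .
  qed
  have "a powr p + b powr p \<le> s powr p * (a / s) + s powr p * (b / s)"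
    using x[of a] x[of b] assms by (intro add_mono) (auto simp: s_def)
  also have "\<dots> = s powr p * ((a + b) / s)" by (simp add: add_divide_distrib distrib_left)
  also have "\<dots> = s powr p" using s by (simp add: s_def)
  finally show ?thesis by (simp add: s_def)
qed

lemma sum_powr_le:
  fixes f :: "'a \<Rightarrow> real" assumes "finite S" "\<forall>x\<in>S. f x \<ge> 0" "p \<ge> 1"
  shows "(\<Sum>x\<in>S. f x powr p) \<le> (\<Sum>x\<in>S. f x) powr p"
  using assms
proof (induction S rule: finite_induct)
  case empty then show ?case by simp
next
  case (insert x S)
  have "(\<Sum>y\<in>insert x S. f y powr p) = f x powr p + (\<Sum>y\<in>S. f y powr p)" using insert by simp
  also have "\<dots> \<le> f x powr p + (\<Sum>y\<in>S. f y) powr p" using insert by simp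
  also have "\<dots> \<le> (f x + (\<Sum>y\<in>S. f y)) powr p"
    using insert by (intro powr_pair_le) (auto intro: sum_nonneg)
  finally show ?case using insert by simp
qed

lemma hol_iter:
  assumes "f holomorphic_on S" "open S"
  shows "(deriv ^^ j) f holomorphic_on S"
  by (induction j) (auto intro: holomorphic_deriv assms)

lemma deriv_iter_has:
  assumes "f holomorphic_on S" "open S" "w \<in> S"
  shows "((deriv ^^ j) f has_field_derivative (deriv ^^ Suc j) f w) (at w)"
proof -
  have "(deriv ^^ j) f holomorphic_on S" by (rule hol_iter[OF assms(1,2)])
  then have "(deriv ^^ j) f field_differentiable at w"
    using assms(2,3) holomorphic_on_imp_differentiable_at by blast
  then show ?thesis by (simp add: DERIV_deriv_iff_field_differentiable)
qed

lemma ray_has_deriv: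
  fixes h :: "complex \<Rightarrow> complex"
  assumes "(h has_field_derivative h') (at (of_real t * \<zeta>))"
  shows "((\<lambda>t. h (of_real t * \<zeta>)) has_vector_derivative (\<zeta> * h')) (at t)"
proof -
  have "((\<lambda>t::real. of_real t * \<zeta>) has_vector_derivative \<zeta>) (at t)"
    by (auto intro!: derivative_eq_intros simp: has_vector_derivative_def scaleR_conv_of_real)
  from field_vector_diff_chain_at[OF this assms] show ?thesis by (simp add: o_def)
qed

lemma norm_power_branch:
  assumes "is_power_branch w p v"
  shows "norm v = norm w powr p"
proof (cases "w = 0")
  case True then show ?thesis using assms by (simp add: is_power_branch_def)
next
  case False
  then obtain L where L: "exp L = w" "v = exp (complex_of_real p * L)"
    using assms by (auto simp: is_power_branch_def)
  have "norm w = exp (Re L)" using L(1) by (metis norm_exp_eq_Re)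
  then have "norm w powr p = exp (p * Re L)" by (simp add: powr_def)
  moreover have "norm v = exp (p * Re L)" using L(2) by (simp add: norm_exp_eq_Re)
  ultimately show ?thesis by simp
qed

lemma step1:
  fixes k :: nat and c nk \<epsilon> :: real and n :: "nat \<Rightarrow> real"
    and A P F :: "nat \<Rightarrow> complex \<Rightarrow> complex" and z :: complex
  assumes nk: "nk > 1" and eps: "\<epsilon> > 0"
    and nkk: "n k = nk" and nj: "\<forall>j<k. 1 < n j \<and> n j \<le> nk"
    and Aj: "\<forall>j\<in>{1..<k}. norm (A j z) * (1 - (norm z)\<^sup>2) powr (nk * (real k - real j)) \<le> \<epsilon> powr nk"
    and A0: "norm (A 0 z) * (1 - (norm z)\<^sup>2) powr (nk * (real k - c)) \<le> \<epsilon> powr nk"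
    and z: "norm z < 1"
    and PB: "\<forall>j\<le>k. is_power_branch (F j z) (n j) (P j z)"
    and eq: "P k z + (\<Sum>j<k. A j z * P j z) = 0"
  shows "norm (F k z) \<le> \<epsilon> * (\<Sum>j<k. (1 - (norm z)\<^sup>2) powr (- (if j = 0 then real k - c else real k - real j)) * (1 + norm (F j z)))"
proof -
  define W where "W = 1 - (norm z)\<^sup>2"
  define e where "e j = (if j = 0 then real k - c else real k - real j)" for j
  have W: "W > 0" unfolding W_def using z by (simp add: abs_square_less_1)
  have normP: "norm (P j z) = norm (F j z) powr n j" if "j \<le> k" for j
    using PB that norm_power_branch by blast
  have Ak: "norm (A j z) \<le> \<epsilon> powr nk * W powr (- (nk * e j))" if "j < k" for j
  proof -
    have "norm (A j z) * W powr (nk * e j) \<le> \<epsilon> powr nk"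
      using Aj A0 that unfolding W_def e_def by (cases "j = 0") auto
    then have "norm (A j z) \<le> \<epsilon> powr nk / W powr (nk * e j)" using W by (simp add: le_divide_eq)
    then show ?thesis by (simp add: powr_minus_divide)
  qed
  define T where "T j = \<epsilon> * W powr (- e j) * (1 + norm (F j z))" for j
  have T0: "T j \<ge> 0" for j unfolding T_def using eps by simp
  have termb: "norm (A j z * P j z) \<le> T j powr nk" if "j < k" for j
  proof -
    have "norm (P j z) = norm (F j z) powr n j" using normP that by simp
    also have "\<dots> \<le> (1 + norm (F j z)) powr n j" using nj that by (intro powr_mono2) auto
    also have "\<dots> \<le> (1 + norm (F j z)) powr nk" using nj that by (intro powr_mono) auto
    finally have Pb: "norm (P j z) \<le> (1 + norm (F j z)) powr nk" .
    have "norm (A j z * P j z) = norm (A j z) * norm (P j z)" by (simp add: norm_mult)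
    also have "\<dots> \<le> \<epsilon> powr nk * W powr (- (nk * e j)) * (1 + norm (F j z)) powr nk"
      using Ak[OF that] Pb by (intro mult_mono) auto
    also have "\<dots> = T j powr nk"
      unfolding T_def using eps W
      by (simp add: powr_mult powr_powr mult.commute[of nk])
    finally show ?thesis .
  qed
  have "norm (F k z) powr nk = norm (P k z)" using normP[of k] nkk by simp
  also have "\<dots> = norm (\<Sum>j<k. A j z * P j z)" using eq by (simp add: eq_neg_iff_add_eq_0[symmetric])
  also have "\<dots> \<le> (\<Sum>j<k. norm (A j z * P j z))" by (rule norm_sum)
  also have "\<dots> \<le> (\<Sum>j<k. T j powr nk)" using termb by (intro sum_mono) auto
  also have "\<dots> \<le> (\<Sum>j<k. T j) powr nk" using T0 nk by (intro sum_powr_le) auto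
  finally have X: "norm (F k z) powr nk \<le> (\<Sum>j<k. T j) powr nk" .
  have "norm (F k z) \<le> (\<Sum>j<k. T j)"
  proof (rule ccontr)
    assume "\<not> ?thesis"
    then have "(\<Sum>j<k. T j) powr nk < norm (F k z) powr nk"
      using T0 nk by (intro powr_less_mono2) (auto intro: sum_nonneg)
    with X show False by simp
  qed
  also have "(\<Sum>j<k. T j) = \<epsilon> * (\<Sum>j<k. W powr (- e j) * (1 + norm (F j z)))"
    unfolding T_def by (simp add: sum_distrib_left mult.assoc)
  finally show ?thesis unfolding W_def e_def .
qed



lemma ray_bound:
  fixes F :: "nat \<Rightarrow> complex \<Rightarrow> complex" and \<zeta> :: complex and k :: nat and \<epsilon> c r :: real
  assumes k: "k \<ge> 1" and c: "c \<ge> 1"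
    and dF: "\<And>j w. norm w < 1 \<Longrightarrow> (F j has_field_derivative F (Suc j) w) (at w)"
    and S1: "\<And>z. norm z < 1 \<Longrightarrow> norm (F k z) \<le> \<epsilon> * (\<Sum>j<k. (1 - (norm z)\<^sup>2) powr (- (if j = 0 then real k - c else real k - real j)) * (1 + norm (F j z)))"
    and eps: "\<epsilon> = 1 / (4 * (real k + 1) * (32 * real k) ^ k)"
    and \<zeta>: "norm \<zeta> = 1" and r: "0 \<le> r" "r < 1"
  shows "norm (F 1 (of_real r * \<zeta>)) * (1 - r) powr (1/8) \<le>
     2 * ((\<Sum>j\<in>{1..<k}. (32 * real k) ^ j * norm (F j 0)) + (32 * real k) ^ k * \<epsilon> * (real k + norm (F 0 0))) / (32 * real k)"
proof -
  define L where "L = 32 * real k"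
  have L: "L \<ge> 32" using k unfolding L_def by simp
  define lam where "lam j = L ^ j" for j :: nat
  have lam1: "lam j \<ge> 1" for j unfolding lam_def using L by simp
  have lam0: "lam j \<ge> 0" for j using lam1[of j] by linarith
  have lamS: "lam (Suc j) = L * lam j" for j unfolding lam_def by simp
  define \<beta> :: real where "\<beta> = 1/8"
  define E where "E j = real j - 1 + \<beta>" for j :: nat
  define \<phi> where "\<phi> j t = F j (of_real t * \<zeta>)" for j t
  define c0 where "c0 = (\<Sum>j\<in>{1..<k}. lam j * norm (F j 0)) + lam k * \<epsilon> * (real k + norm (F 0 0))"
  have c0': "(\<Sum>j\<in>{1..<k}. (32 * real k) ^ j * norm (F j 0)) + (32 * real k) ^ k * \<epsilon> * (real k + norm (F 0 0)) = c0"
    unfolding c0_def lam_def L_def by simp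
  have nz: "norm (of_real t * \<zeta>) = \<bar>t\<bar>" for t using \<zeta> by (simp add: norm_mult)
  have d\<phi>: "(\<phi> j has_vector_derivative (\<zeta> * F (Suc j) (of_real t * \<zeta>))) (at t)" if "\<bar>t\<bar> < 1" for j t
    unfolding \<phi>_def by (rule ray_has_deriv) (rule dF, use nz that in simp)
  have nd\<phi>: "norm (\<zeta> * F (Suc j) (of_real t * \<zeta>)) = norm (\<phi> (Suc j) t)" for j t
    using \<zeta> by (simp add: norm_mult \<phi>_def)
  define G where "G t = (\<Sum>j\<in>{1..k}. lam j * norm (\<phi> j t) * (1 - t) powr E j)" for t
  have G0: "G t \<ge> 0" for t unfolding G_def using lam0 by (intro sum_nonneg) simp
  have contG: "continuous_on {0..r} G"
  proof (intro continuous_at_imp_continuous_on ballI)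
    fix t assume t: "t \<in> {0..r}"
    then have t1: "\<bar>t\<bar> < 1" using r by auto
    have c1: "isCont (\<phi> j) t" for j using has_vector_derivative_continuous[OF d\<phi>[OF t1]] .
    have c2: "isCont (\<lambda>t. (1 - t) powr a) t" for a
      using DERIV_isCont[OF deriv_pow1m[of t a]] t1 by simp
    show "isCont G t" unfolding G_def
      by (intro isCont_sum ballI continuous_intros c1 c2)
  qed
  have bdd: "bdd_above (G ` {0..r})"
    by (intro bounded_imp_bdd_above compact_imp_bounded compact_continuous_image contG) simp
  define N where "N = Sup (G ` {0..r})"
  have GN: "G t \<le> N" if "t \<in> {0..r}" for t unfolding N_def using bdd that by (intro cSup_upper) auto
  have N0: "N \<ge> 0" using GN[of 0] G0[of 0] r by simp
  have H: "norm (\<phi> j t) \<le> N / lam j * (1 - t) powr (- E j)" if t: "t \<in> {0..r}" and j: "j \<in> {1..k}" for j t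
  proof -
    have t1: "1 - t > 0" using t r by auto
    have "lam j * norm (\<phi> j t) * (1 - t) powr E j \<le> G t"
      unfolding G_def using j lam0 by (intro member_le_sum) auto
    also have "\<dots> \<le> N" by (rule GN[OF t])
    finally have "norm (\<phi> j t) * (lam j * (1 - t) powr E j) \<le> N" by (simp add: ac_simps)
    moreover have "lam j * (1 - t) powr E j > 0" using lam1[of j] t1 by simp
    ultimately have "norm (\<phi> j t) \<le> N / (lam j * (1 - t) powr E j)" by (simp add: le_divide_eq)
    also have "\<dots> = N / lam j * (1 - t) powr (- E j)" by (simp add: powr_minus_divide)
    finally show ?thesis .
  qed
  have main: "G s \<le> c0 + N / 2" if s: "s \<in> {0..r}" for s
  proof -
    have s1: "1 - s > 0" "s \<ge> 0" "s < 1" "s \<le> r" using s r by auto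
    have pw1: "(1 - s) powr a \<le> 1" if "a \<ge> 0" for a using s1 that by (intro powr_le1) auto
    have sub: "t \<in> {0..r}" "\<bar>t\<bar> < 1" if "t \<in> {0..s}" for t using that s1 r by auto
    have Aj: "lam j * norm (\<phi> j s) * (1 - s) powr E j \<le> lam j * norm (F j 0) + N / (4 * real k)"
      if j: "j \<in> {1..<k}" for j
    proof -
      have Ej: "E j \<ge> 1/8" using j unfolding E_def \<beta>_def by auto
      define g where "g t = N / (lam (Suc j) * E j) * (1 - t) powr (- E j)" for t
      have dg: "(g has_real_derivative N / lam (Suc j) * (1 - t) powr (- E (Suc j))) (at t)"
        if "t \<in> {0..s}" for t
      proof -
        have "(g has_real_derivative N / (lam (Suc j) * E j) * (- (- E j) * (1 - t) powr (- E j - 1))) (at t)"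
          unfolding g_def using sub[OF that] by (intro DERIV_cmult deriv_pow1m) auto
        moreover have "N / (lam (Suc j) * E j) * (- (- E j) * (1 - t) powr (- E j - 1))
             = N / lam (Suc j) * (1 - t) powr (- E (Suc j))"
        proof -
          have e1: "- E j - 1 = - E (Suc j)" unfolding E_def by simp
          have "E j \<noteq> 0" "lam (Suc j) \<noteq> 0" using Ej lam1[of "Suc j"] by auto
          then show ?thesis unfolding e1 by (simp add: field_simps)
        qed
        ultimately show ?thesis by simp
      qed
      have le: "norm (\<zeta> * F (Suc j) (of_real t * \<zeta>)) \<le> N / lam (Suc j) * (1 - t) powr (- E (Suc j))"
        if "t \<in> {0..s}" for t
        unfolding nd\<phi> using H[OF sub(1)[OF that], of "Suc j"] j by simp
      have "norm (\<phi> j s - \<phi> j 0) \<le> g s - g 0"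
        by (rule norm_diff_le_by_deriv[OF s1(2) d\<phi>[OF sub(2)] dg le])
      moreover have "g 0 \<ge> 0" unfolding g_def using N0 Ej lam1[of "Suc j"] by simp
      moreover have "\<phi> j 0 = F j 0" unfolding \<phi>_def by simp
      ultimately have nb: "norm (\<phi> j s) \<le> norm (F j 0) + g s"
        using norm_triangle_ineq2[of "\<phi> j s" "\<phi> j 0"] by simp
      have "lam j * norm (\<phi> j s) * (1 - s) powr E j \<le> lam j * (norm (F j 0) + g s) * (1 - s) powr E j"
        using nb lam0 by (intro mult_right_mono mult_left_mono) auto
      also have "\<dots> = lam j * norm (F j 0) * (1 - s) powr E j + lam j * (g s * (1 - s) powr E j)"
        by (simp add: algebra_simps)
      also have "g s * (1 - s) powr E j = N / (lam (Suc j) * E j)"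
        unfolding g_def using s1 by (simp add: powr_minus_divide)
      also have "lam j * (N / (lam (Suc j) * E j)) = N / (L * E j)"
        using lam1[of j] unfolding lamS by (simp add: field_simps)
      also have "N / (L * E j) \<le> N / (4 * real k)"
      proof (rule divide_left_mono[OF _ N0])
        have "4 * real k = (32 * real k) * (1/8)" by simp
        also have "\<dots> \<le> L * E j" unfolding L_def using Ej by (intro mult_left_mono) auto
        finally show "4 * real k \<le> L * E j" .
        show "0 < L * E j * (4 * real k)" using L Ej k by simp
      qed
      also have "lam j * norm (F j 0) * (1 - s) powr E j \<le> lam j * norm (F j 0)"
        using pw1[of "E j"] Ej lam0[of j] by (simp add: mult_left_le)
      finally show ?thesis by simp
    qed
    have B0: "norm (\<phi> 0 s) \<le> norm (F 0 0) + 2 * N / L"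
    proof -
      define g where "g t = - (N / (L * (1 - \<beta>))) * (1 - t) powr (1 - \<beta>)" for t
      have dg: "(g has_real_derivative N / lam 1 * (1 - t) powr (- E 1)) (at t)"
        if "t \<in> {0..s}" for t
      proof -
        have "(g has_real_derivative - (N / (L * (1 - \<beta>))) * (- (1 - \<beta>) * (1 - t) powr (1 - \<beta> - 1))) (at t)"
          unfolding g_def using sub[OF that] by (intro DERIV_cmult deriv_pow1m) auto
        moreover have "- (N / (L * (1 - \<beta>))) * (- (1 - \<beta>) * (1 - t) powr (1 - \<beta> - 1))
             = N / lam 1 * (1 - t) powr (- E 1)"
          unfolding E_def lam_def \<beta>_def by simp
        ultimately show ?thesis by simp
      qed
      have le: "norm (\<zeta> * F (Suc 0) (of_real t * \<zeta>)) \<le> N / lam 1 * (1 - t) powr (- E 1)"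
        if "t \<in> {0..s}" for t
        unfolding nd\<phi> using H[OF sub(1)[OF that], of 1] k by simp
      have "norm (\<phi> 0 s - \<phi> 0 0) \<le> g s - g 0"
        by (rule norm_diff_le_by_deriv[OF s1(2) d\<phi>[OF sub(2)] dg le])
      also have "g s - g 0 = N / (L * (1 - \<beta>)) * (1 - (1 - s) powr (1 - \<beta>))"
        unfolding g_def by (simp add: algebra_simps)
      also have "\<dots> \<le> N / (L * (1 - \<beta>)) * 1"
        using N0 L s1 unfolding \<beta>_def by (intro mult_left_mono) auto
      also have "\<dots> \<le> 2 * N / L" using N0 L unfolding \<beta>_def by (simp add: field_simps)
      finally have "norm (\<phi> 0 s - \<phi> 0 0) \<le> 2 * N / L" .
      moreover have "\<phi> 0 0 = F 0 0" unfolding \<phi>_def by simp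
      ultimately show ?thesis using norm_triangle_ineq2[of "\<phi> 0 s" "\<phi> 0 0"] by simp
    qed
    have Ck: "lam k * norm (\<phi> k s) * (1 - s) powr E k \<le> lam k * \<epsilon> * (real k + norm (F 0 0)) + N / 4"
    proof -
      define W where "W = 1 - s^2"
      have ss: "s * s \<le> s" using s1 by (simp add: mult_left_le_one_le)
      have W: "1 - s \<le> W" "W \<le> 1" "W > 0" unfolding W_def using s1 ss by (auto simp: power2_eq_square)
      define Tm where "Tm j = W powr (- (if j = 0 then real k - c else real k - real j)) * (1 + norm (\<phi> j s))" for j
      have Tm0: "Tm j \<ge> 0" for j unfolding Tm_def by simp
      have S: "norm (\<phi> k s) \<le> \<epsilon> * (\<Sum>j<k. Tm j)"
        using S1[of "of_real s * \<zeta>"] nz[of s] s1 unfolding Tm_def W_def \<phi>_def by simp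
      have T0: "(1 - s) powr E k * Tm 0 \<le> 1 + norm (F 0 0) + 2 * N"
      proof -
        have fac: "(1 - s) powr E k * W powr (- (real k - c)) \<le> 1"
        proof (cases "real k - c \<ge> 0")
          case True
          have "W powr (- (real k - c)) \<le> (1 - s) powr (- (real k - c))"
            using True W s1 by (intro powr_mono2') auto
          then have "(1 - s) powr E k * W powr (- (real k - c)) \<le> (1 - s) powr E k * (1 - s) powr (- (real k - c))"
            by (intro mult_left_mono) auto
          also have "\<dots> = (1 - s) powr (c - 1 + \<beta>)"
            using s1 unfolding E_def by (simp add: powr_add[symmetric] algebra_simps)
          also have "\<dots> \<le> 1" using c unfolding \<beta>_def by (intro pw1) auto
          finally show ?thesis .
        next
          case False
          have "W powr (- (real k - c)) \<le> 1" using False W by (intro powr_le1) auto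
          moreover have "(1 - s) powr E k \<le> 1" using k unfolding E_def \<beta>_def by (intro pw1) auto
          ultimately show ?thesis by (simp add: mult_le_one)
        qed
        have "1 + norm (\<phi> 0 s) \<le> 1 + norm (F 0 0) + 2 * N"
        proof -
          have "N * 1 \<le> N * L" using N0 L by (intro mult_left_mono) auto
          then have "2 * N / L \<le> 2 * N" using N0 L by (simp add: divide_le_eq mult.commute)
          then show ?thesis using B0 by simp
        qed
        then have "(1 - s) powr E k * Tm 0 \<le> 1 * (1 + norm (F 0 0) + 2 * N)"
          unfolding Tm_def using fac by (simp only: mult.assoc[symmetric] if_True) (intro mult_mono, auto)
        then show ?thesis by simp
      qed
      have Tj: "(1 - s) powr E k * Tm j \<le> 1 + N" if j: "j \<in> {1..<k}" for j
      proof -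
        have jj: "j \<noteq> 0" "real k - real j \<ge> 0" using j by auto
        have "W powr (- (real k - real j)) \<le> (1 - s) powr (- (real k - real j))"
          using jj W s1 by (intro powr_mono2') auto
        then have "(1 - s) powr E k * W powr (- (real k - real j)) \<le> (1 - s) powr E k * (1 - s) powr (- (real k - real j))"
          by (intro mult_left_mono) auto
        also have "\<dots> = (1 - s) powr E j"
          using s1 unfolding E_def by (simp add: powr_add[symmetric] algebra_simps)
        finally have f: "(1 - s) powr E k * W powr (- (real k - real j)) \<le> (1 - s) powr E j" .
        have Ej: "E j \<ge> 0" using j unfolding E_def \<beta>_def by auto
        have "(1 - s) powr E k * Tm j \<le> (1 - s) powr E j * (1 + norm (\<phi> j s))"
          unfolding Tm_def using f jj by (simp only: mult.assoc[symmetric] if_False) (intro mult_right_mono, auto)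
        also have "\<dots> = (1 - s) powr E j + norm (\<phi> j s) * (1 - s) powr E j" by (simp add: algebra_simps)
        also have "norm (\<phi> j s) * (1 - s) powr E j \<le> N / lam j * (1 - s) powr (- E j) * (1 - s) powr E j"
          using H[OF s, of j] j by (intro mult_right_mono) auto
        also have "\<dots> = N / lam j" using s1 by (simp add: powr_add[symmetric])
        also have "\<dots> \<le> N" using N0 lam1[of j] by (simp add: divide_le_eq mult_le_cancel_left1 mult.commute)
        finally show ?thesis using pw1[OF Ej] by simp
      qed
      have kset: "{..<k} = insert 0 {1..<k}" using k by auto
      have "(1 - s) powr E k * (\<Sum>j<k. Tm j) = (1 - s) powr E k * Tm 0 + (\<Sum>j\<in>{1..<k}. (1 - s) powr E k * Tm j)"
        unfolding kset by (simp add: sum_distrib_left distrib_left)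
      also have "\<dots> \<le> (1 + norm (F 0 0) + 2 * N) + (\<Sum>j\<in>{1..<k}. 1 + N)"
        using T0 Tj by (intro add_mono sum_mono) auto
      also have "\<dots> = real k + norm (F 0 0) + (real k + 1) * N"
        using k by (simp add: of_nat_diff algebra_simps)
      finally have sumb: "(1 - s) powr E k * (\<Sum>j<k. Tm j) \<le> real k + norm (F 0 0) + (real k + 1) * N" .
      have epos: "\<epsilon> > 0" using eps k by simp
      have "lam k * norm (\<phi> k s) * (1 - s) powr E k \<le> lam k * (\<epsilon> * (\<Sum>j<k. Tm j)) * (1 - s) powr E k"
        using S lam0 by (intro mult_right_mono mult_left_mono) auto
      also have "\<dots> = lam k * \<epsilon> * ((1 - s) powr E k * (\<Sum>j<k. Tm j))" by (simp add: ac_simps)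
      also have "\<dots> \<le> lam k * \<epsilon> * (real k + norm (F 0 0) + (real k + 1) * N)"
        using sumb lam0 epos by (intro mult_left_mono) auto
      also have "\<dots> = lam k * \<epsilon> * (real k + norm (F 0 0)) + (lam k * \<epsilon> * (real k + 1)) * N"
        by (simp add: algebra_simps)
      also have "lam k * \<epsilon> * (real k + 1) = 1 / 4"
      proof -
        have p: "(32 * real k)^k > 0" "real k + 1 > 0" using k by auto
        have "lam k * \<epsilon> * (real k + 1) = (32 * real k)^k * (real k + 1) / (4 * (real k + 1) * (32 * real k) ^ k)"
          unfolding eps lam_def L_def by (simp, presburger)
        also have "\<dots> = ((32 * real k)^k * (real k + 1)) / (4 * ((32 * real k)^k * (real k + 1)))"
          by (simp add: ac_simps) presburger
        also have "\<dots> = 1 / 4" using p by (subst nonzero_divide_mult_cancel_right) auto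
        finally show ?thesis .
      qed
      finally show ?thesis by simp
    qed
    have kset: "{1..k} = insert k {1..<k}" using k by auto
    have "G s = (\<Sum>j\<in>{1..<k}. lam j * norm (\<phi> j s) * (1 - s) powr E j) + lam k * norm (\<phi> k s) * (1 - s) powr E k"
      unfolding G_def kset by simp
    also have "\<dots> \<le> (\<Sum>j\<in>{1..<k}. lam j * norm (F j 0) + N / (4 * real k)) + (lam k * \<epsilon> * (real k + norm (F 0 0)) + N / 4)"
      using Aj Ck by (intro add_mono sum_mono) auto
    also have "\<dots> = c0 + (real k - 1) * (N / (4 * real k)) + N / 4"
      using k unfolding c0_def by (simp add: sum.distrib of_nat_diff algebra_simps)
    also have "\<dots> \<le> c0 + N / 2"
    proof -
      have "(real k - 1) * (N / (4 * real k)) \<le> real k * (N / (4 * real k))"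
        using N0 k by (intro mult_right_mono) auto
      also have "\<dots> = N / 4" using k by simp
      finally show ?thesis by linarith
    qed
    finally show ?thesis .
  qed
  have "Sup (G ` {0..r}) \<le> c0 + N / 2" using main r by (intro cSup_least) auto
  then have "N \<le> c0 + N / 2" by (simp only: N_def[symmetric])
  then have N2: "N \<le> 2 * c0" by simp
  have "lam 1 * norm (\<phi> 1 r) * (1 - r) powr E 1 \<le> G r"
    unfolding G_def using k lam0 by (intro member_le_sum) auto
  also have "\<dots> \<le> 2 * c0" using GN[of r] r N2 by simp
  finally have "L * (norm (\<phi> 1 r) * (1 - r) powr (1/8)) \<le> 2 * c0"
    unfolding lam_def E_def \<beta>_def by (simp add: mult.assoc)
  then have "norm (\<phi> 1 r) * (1 - r) powr (1/8) \<le> 2 * c0 / L"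
    using L by (simp add: le_divide_eq mult.commute)
  then show ?thesis unfolding c0' \<phi>_def L_def .
qed



theorem theorem2p1:
  fixes k :: nat and c nk :: real and K :: "real \<Rightarrow> real"
  assumes "k \<ge> 1"
    and "nk > 1"
    and "1 < c" and "c < 3/2"
    and "mono_on {0..} K" and "\<forall>t\<ge>0. K t \<ge> 0"
    and "(\<integral>\<^sup>+ s\<in>{1..}. phiK K s * ennreal (1 / s powr (2*c - 1)) \<partial>lborel) < \<infinity>"
  shows "\<exists>\<alpha>>0. \<forall>(n :: nat \<Rightarrow> real) (A :: nat \<Rightarrow> complex \<Rightarrow> complex) (f :: complex \<Rightarrow> complex)
            (P :: nat \<Rightarrow> complex \<Rightarrow> complex).
       n k = nk \<and> (\<forall>j<k. 1 < n j \<and> n j \<le> nk)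
       \<and> (\<forall>j<k. A j holomorphic_on unit_disk)
       \<and> (\<forall>j\<in>{1..<k}. \<forall>z\<in>unit_disk.
             norm (A j z) * (1 - (norm z)\<^sup>2) powr (nk * (real k - real j)) \<le> \<alpha>)
       \<and> (\<forall>z\<in>unit_disk. norm (A 0 z) * (1 - (norm z)\<^sup>2) powr (nk * (real k - c)) \<le> \<alpha>)
       \<and> f holomorphic_on unit_disk
       \<and> (\<forall>j\<le>k. \<forall>z\<in>unit_disk. is_power_branch ((deriv ^^ j) f z) (n j) (P j z))
       \<and> (\<forall>z\<in>unit_disk. P k z + (\<Sum>j<k. A j z * P j z) = 0)
       \<longrightarrow> in_QK K f"
proof -
  note k = assms(1) and nk = assms(2) and c = assms(3,4) and Km = assms(5) and Kp = assms(6) and I = assms(7)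
  obtain C where C: "C \<ge> 0" "\<forall>t\<ge>0. K t \<le> C * (1 + t)"
    using K_linear_bound[OF Km Kp c I] by blast
  define \<epsilon> :: real where "\<epsilon> = 1 / (4 * (real k + 1) * (32 * real k) ^ k)"
  have eps: "\<epsilon> > 0" unfolding \<epsilon>_def using k by simp
  define \<alpha> where "\<alpha> = \<epsilon> powr nk"
  have "\<alpha> > 0" unfolding \<alpha>_def using eps by simp
  moreover have "in_QK K f"
    if H: "n k = nk \<and> (\<forall>j<k. 1 < n j \<and> n j \<le> nk)
       \<and> (\<forall>j<k. A j holomorphic_on unit_disk)
       \<and> (\<forall>j\<in>{1..<k}. \<forall>z\<in>unit_disk.
             norm (A j z) * (1 - (norm z)\<^sup>2) powr (nk * (real k - real j)) \<le> \<alpha>)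
       \<and> (\<forall>z\<in>unit_disk. norm (A 0 z) * (1 - (norm z)\<^sup>2) powr (nk * (real k - c)) \<le> \<alpha>)
       \<and> f holomorphic_on unit_disk
       \<and> (\<forall>j\<le>k. \<forall>z\<in>unit_disk. is_power_branch ((deriv ^^ j) f z) (n j) (P j z))
       \<and> (\<forall>z\<in>unit_disk. P k z + (\<Sum>j<k. A j z * P j z) = 0)"
    for n A f P
  proof -
    from H have nkk: "n k = nk" and nj: "\<forall>j<k. 1 < n j \<and> n j \<le> nk"
      and Aj: "\<forall>j\<in>{1..<k}. \<forall>z\<in>unit_disk. norm (A j z) * (1 - (norm z)\<^sup>2) powr (nk * (real k - real j)) \<le> \<alpha>"
      and A0: "\<forall>z\<in>unit_disk. norm (A 0 z) * (1 - (norm z)\<^sup>2) powr (nk * (real k - c)) \<le> \<alpha>"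
      and hol: "f holomorphic_on unit_disk"
      and PB: "\<forall>j\<le>k. \<forall>z\<in>unit_disk. is_power_branch ((deriv ^^ j) f z) (n j) (P j z)"
      and eq: "\<forall>z\<in>unit_disk. P k z + (\<Sum>j<k. A j z * P j z) = 0"
      by blast+
    define F where "F j = (deriv ^^ j) f" for j
    have ud: "unit_disk = ball 0 1" by (simp add: unit_disk_def)
    have dF: "(F j has_field_derivative F (Suc j) w) (at w)" if "norm w < 1" for j w
      unfolding F_def using deriv_iter_has[of f "ball 0 1" w j] hol that by (simp add: ud)
    have S1: "norm (F k z) \<le> \<epsilon> * (\<Sum>j<k. (1 - (norm z)\<^sup>2) powr (- (if j = 0 then real k - c else real k - real j)) * (1 + norm (F j z)))"
      if z: "norm z < 1" for z
    proof -
      have zd: "z \<in> unit_disk" using z by (simp add: ud)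
      show ?thesis unfolding F_def
        by (rule step1[where F="\<lambda>j. (deriv ^^ j) f" and A=A and c=c and P=P and n=n and k=k and nk=nk and \<epsilon>=\<epsilon> and z=z])
          (use nk eps nkk nj z Aj A0 PB eq zd in \<open>auto simp: \<alpha>_def\<close>)
    qed
    define c0 where "c0 = (\<Sum>j\<in>{1..<k}. (32 * real k) ^ j * norm (F j 0)) + (32 * real k) ^ k * \<epsilon> * (real k + norm (F 0 0))"
    define M where "M = max 0 (2 * c0 / (32 * real k))"
    have bound: "norm (deriv f z) \<le> M * (1 - norm z) powr (-1/8)" if z: "z \<in> unit_disk" for z
    proof -
      have z1: "norm z < 1" using z by (simp add: ud)
      define \<zeta> where "\<zeta> = (if z = 0 then 1 else z / of_real (norm z))"
      have \<zeta>: "norm \<zeta> = 1" unfolding \<zeta>_def by (simp add: norm_divide)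
      have zz: "of_real (norm z) * \<zeta> = z" unfolding \<zeta>_def by simp
      have "norm (F 1 (of_real (norm z) * \<zeta>)) * (1 - norm z) powr (1/8) \<le> 2 * c0 / (32 * real k)"
        unfolding c0_def
        by (rule ray_bound[OF k _ dF S1 \<epsilon>_def \<zeta>]) (use c z1 in auto)
      then have "norm (deriv f z) * (1 - norm z) powr (1/8) \<le> M"
        unfolding zz F_def M_def by simp
      moreover have "(1 - norm z) powr (1/8) > 0" using z1 by simp
      ultimately have "norm (deriv f z) \<le> M / (1 - norm z) powr (1/8)" by (simp add: le_divide_eq)
      then show ?thesis by (simp add: powr_minus_divide)
    qed
    have "QK_norm2 K f < \<infinity>"
      by (rule QK_finite[where M=M, OF _ _ C]) (use bound in \<open>auto simp: M_def\<close>)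
    then show ?thesis using hol by (simp add: in_QK_def)
  qed
  ultimately show ?thesis by blast
qed

end
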